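(* Let $0\le k\le n$ be fixed. Let $\mathcal{G}=\{U^g\mid g\in G=\mathbb{Z}_2^{\times(n-k)}\}$, where $U^e=I^{\otimes n}$, be a Pauli stabilizer group on $\mathcal{H}\simeq(\mathbb{C}^2)^{\otimes n}$, i.e. $-I\notin\mathcal{G}$ and for all $g,h\in G$: $U^g\in\mathcal{P}_n$, $[U^g,U^h]=0$, $U^gU^h=U^{gh}\in\mathcal{G}$, and $U^g=U^h$ iff $g=h$. Then there exists $A\subseteq\{1,\ldots,n\}$ with exactly $k$ elements such that $\pi_A(U^g)=I^{\otimes n}$ if and only if $g=e$, where $\pi_A=\prod_{a\in A}\pi_a$.
   Context: $\mathcal{P}_n$ is the $n$-qubit Pauli group (operators $i^\lambda\mathcal{O}_1\cdots\mathcal{O}_n$, $\lambda\in\{0,1,2,3\}$, $\mathcal{O}_j\in\{I,X,Y,Z\}$ acting on qubit $j$). For $a\in\{1,\ldots,n\}$, $\pi_a:\mathcal{P}_n\to\mathcal{P}_n$ maps $i^\lambda\mathcal{O}_1\cdots\mathcal{O}_{a-1}\mathcal{O}_a\mathcal{O}_{a+1}\cdots\mathcal{O}_n$ to $\mathcal{O}_1\cdots\mathcal{O}_{a-1}I\mathcal{O}_{a+1}\cdots\mathcal{O}_n$, i.e. it replaces the $a$-th letter by the identity and removes any prefactor other than $1$. *)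

theory Defs
  imports Main
begin

datatype pauli = PI | PX | PY | PZ

text \<open>Product of two letters: returns (lambda, O) meaning i^lambda O.\<close>
fun pmul :: "pauli \<Rightarrow> pauli \<Rightarrow> nat \<times> pauli" where
  "pmul PI p = (0, p)"
| "pmul PX PI = (0, PX)" | "pmul PY PI = (0, PY)" | "pmul PZ PI = (0, PZ)"
| "pmul PX PX = (0, PI)" | "pmul PY PY = (0, PI)" | "pmul PZ PZ = (0, PI)"
| "pmul PX PY = (1, PZ)" | "pmul PY PX = (3, PZ)"
| "pmul PY PZ = (1, PX)" | "pmul PZ PY = (3, PX)"
| "pmul PZ PX = (1, PY)" | "pmul PX PZ = (3, PY)"

text \<open>An n-qubit Pauli operator i^lambda O_1 ... O_n is encoded as (lambda, [O_1,...,O_n]),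
  with lambda in {0,1,2,3}; this encoding is faithful (the operators are distinct).\<close>
type_synonym pop = "nat \<times> pauli list"

definition pauli_group :: "nat \<Rightarrow> pop set" where
  "pauli_group n = {(l, w). l < 4 \<and> length w = n}"

definition pop_mult :: "pop \<Rightarrow> pop \<Rightarrow> pop" where
  "pop_mult U V =
     (let ps = map2 pmul (snd U) (snd V)
      in ((fst U + fst V + sum_list (map fst ps)) mod 4, map snd ps))"

definition pop_id :: "nat \<Rightarrow> pop" where
  "pop_id n = (0, replicate n PI)"

definition pop_minus_id :: "nat \<Rightarrow> pop" where
  "pop_minus_id n = (2, replicate n PI)"

definition pi_proj :: "nat \<Rightarrow> pop \<Rightarrow> pop" where
  "pi_proj a U = (0, (snd U)[a - 1 := PI])"

definition pi_set :: "nat set \<Rightarrow> pop \<Rightarrow> pop" where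
  "pi_set A = Finite_Set.fold (\<lambda>a f. pi_proj a \<circ> f) id A"

definition Z2vec :: "nat \<Rightarrow> bool list set" where
  "Z2vec m = {g. length g = m}"

definition z2_mult :: "bool list \<Rightarrow> bool list \<Rightarrow> bool list" where
  "z2_mult g h = map2 (\<noteq>) g h"

definition z2_unit :: "nat \<Rightarrow> bool list" where
  "z2_unit m = replicate m False"

end

theory Submission
  imports Defs
begin


lemma pi_cfc: "comp_fun_commute (\<lambda>a f. pi_proj a \<circ> f)"
  unfolding comp_fun_commute_def
proof (intro allI)
  fix y x
  show "(\<lambda>f. pi_proj y \<circ> f) \<circ> (\<lambda>f. pi_proj x \<circ> f) = (\<lambda>f. pi_proj x \<circ> f) \<circ> (\<lambda>f. pi_proj y \<circ> f)"
    by (cases "x - 1 = y - 1") (auto simp: fun_eq_iff pi_proj_def list_update_swap)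
qed

lemma pi_set_empty: "pi_set {} = id"
  by (simp add: pi_set_def)

lemma pi_set_insert: "finite A \<Longrightarrow> a \<notin> A \<Longrightarrow> pi_set (insert a A) = pi_proj a \<circ> pi_set A"
proof -
  assume "finite A" "a \<notin> A"
  interpret comp_fun_commute "\<lambda>a f. pi_proj a \<circ> f" by (rule pi_cfc)
  show ?thesis unfolding pi_set_def using \<open>finite A\<close> \<open>a \<notin> A\<close> by simp
qed

lemma pi_set_char:
  assumes "finite A" "0 \<notin> A"
  shows "length (snd (pi_set A U)) = length (snd U) \<and>
    (\<forall>i<length (snd U). snd (pi_set A U) ! i = (if Suc i \<in> A then PI else snd U ! i)) \<and>
    (A \<noteq> {} \<longrightarrow> fst (pi_set A U) = 0)"
  using assms
proof (induction A rule: finite_induct)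
  case empty
  then show ?case by (simp add: pi_set_empty)
next
  case (insert a A)
  then obtain b where b: "a = Suc b" by (cases a) auto
  have nb: "\<And>i. Suc i \<in> A \<Longrightarrow> i \<noteq> b" using insert(2) b by auto
  have IH: "length (snd (pi_set A U)) = length (snd U)"
    "\<And>i. i<length (snd U) \<Longrightarrow> snd (pi_set A U) ! i = (if Suc i \<in> A then PI else snd U ! i)"
    using insert by auto
  have eq: "pi_set (insert a A) U = (0, (snd (pi_set A U))[b := PI])"
    using insert by (simp add: pi_set_insert pi_proj_def b)
  have "snd (pi_set (insert a A) U) ! i = (if Suc i \<in> insert a A then PI else snd U ! i)"
    if i: "i < length (snd U)" for i
  proof (cases "i = b")
    case True
    then show ?thesis using eq IH i b by simp
  next
    case False
    then show ?thesis using eq IH(2)[OF i] b by (simp add: nth_list_update_neq)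
  qed
  then show ?case using eq IH by simp
qed

lemma card_Z2: "card (Z2vec m) = 2 ^ m"
proof -
  have "Z2vec m = {xs. set xs \<subseteq> (UNIV::bool set) \<and> length xs = m}" by (simp add: Z2vec_def)
  then show ?thesis using card_lists_length_eq[of "UNIV::bool set" m] by simp
qed

lemma fin_Z2: "finite (Z2vec m)"
proof -
  have "Z2vec m = {xs. set xs \<subseteq> (UNIV::bool set) \<and> length xs = m}" by (simp add: Z2vec_def)
  then show ?thesis using finite_lists_length_eq[of "UNIV::bool set" m] by simp
qed

lemma pmul_PI_r: "snd (pmul x PI) = x" by (cases x) auto
lemma pmul_PI_l: "snd (pmul PI y) = y" by (cases y) auto
lemma pmul_nz: "y \<noteq> PI \<Longrightarrow> snd (pmul PI y) \<noteq> PI" by (cases y) auto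



theorem mainTheorem13:
  fixes n k :: nat and U :: "bool list \<Rightarrow> pop"
  assumes "k \<le> n"
    and "U (z2_unit (n - k)) = pop_id n"
    and "pop_minus_id n \<notin> U ` Z2vec (n - k)"
    and "\<forall>g \<in> Z2vec (n - k). U g \<in> pauli_group n"
    and "\<forall>g \<in> Z2vec (n - k). \<forall>h \<in> Z2vec (n - k). pop_mult (U g) (U h) = pop_mult (U h) (U g)"
    and "\<forall>g \<in> Z2vec (n - k). \<forall>h \<in> Z2vec (n - k). pop_mult (U g) (U h) = U (z2_mult g h)"
    and "\<forall>g \<in> Z2vec (n - k). \<forall>h \<in> Z2vec (n - k). U g = U h \<longleftrightarrow> g = h"
  shows "\<exists>A \<subseteq> {1..n}. card A = k \<and>
           (\<forall>g \<in> Z2vec (n - k). pi_set A (U g) = pop_id n \<longleftrightarrow> g = z2_unit (n - k))"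
  proof -
  define m where "m = n - k"
  define e where "e = z2_unit m"
  define L where "L g i = snd (U g) ! (i - 1)" for g i
  define Triv where "Triv A = (\<forall>g\<in>Z2vec m. (\<forall>i\<in>{1..n}-A. L g i = PI) \<longrightarrow> g = e)" for A
  have eZ: "e \<in> Z2vec m" by (simp add: e_def z2_unit_def Z2vec_def)
  have mulZ: "z2_mult g h \<in> Z2vec m" if "g \<in> Z2vec m" "h \<in> Z2vec m" for g h
    using that by (simp add: Z2vec_def z2_mult_def)
  have len: "length (snd (U g)) = n" if "g \<in> Z2vec m" for g
    using assms(4) that by (auto simp: m_def pauli_group_def)
  have hmul: "L (z2_mult g h) i = snd (pmul (L g i) (L h i))"
    if "g \<in> Z2vec m" "h \<in> Z2vec m" "i \<in> {1..n}" for g h i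
  proof -
    have "U (z2_mult g h) = pop_mult (U g) (U h)" using assms(6) that by (simp add: m_def)
    moreover have "i - 1 < n" using that(3) by auto
    ultimately show ?thesis using that len[OF that(1)] len[OF that(2)]
      by (simp add: L_def pop_mult_def Let_def)
  qed
  have he: "L e i = PI" if "i \<in> {1..n}" for i
    using assms(2) that by (auto simp: L_def e_def m_def pop_id_def)
  have step: "\<exists>j\<in>{1..n}-A. Triv (insert j A)"
    if A: "A \<subseteq> {1..n}" "Triv A" "card A < k" for A
  proof (rule ccontr)
    assume nt: "\<not> ?thesis"
    define B where "B = {1..n} - A"
    have finA: "finite A" using A(1) finite_subset by blast
    have finB: "finite B" by (simp add: B_def)
    have cB: "card B = n - card A" using A(1) finA by (simp add: B_def card_Diff_subset)
    have "\<forall>j\<in>B. \<exists>g\<in>Z2vec m. (\<forall>i\<in>{1..n}-insert j A. L g i = PI) \<and> g \<noteq> e"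
      using nt unfolding Triv_def B_def by blast
    then obtain G where G: "\<And>j. j \<in> B \<Longrightarrow> G j \<in> Z2vec m \<and> (\<forall>i\<in>{1..n}-insert j A. L (G j) i = PI) \<and> G j \<noteq> e"
      by metis
    have Gj: "L (G j) j \<noteq> PI" if "j \<in> B" for j
    proof
      assume "L (G j) j = PI"
      then have "\<forall>i\<in>{1..n}-A. L (G j) i = PI" using G[OF that] by auto
      then have "G j = e" using A(2) G[OF that] unfolding Triv_def by blast
      then show False using G[OF that] by blast
    qed
    have Gi: "L (G j) i = PI" if "j \<in> B" "i \<in> B" "i \<noteq> j" for i j
      using G[OF that(1)] that by (auto simp: B_def)
    define phi where "phi g = {j\<in>B. L g j \<noteq> PI}" for g
    have surj: "T \<subseteq> B \<longrightarrow> (\<exists>g\<in>Z2vec m. phi g = T)" if "finite T" for T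
      using that
    proof (induction T rule: finite_induct)
      case empty
      show ?case using eZ he by (auto simp: phi_def B_def intro!: bexI[of _ e])
    next
      case (insert t T)
      show ?case
      proof
        assume sub: "insert t T \<subseteq> B"
        then obtain g where g: "g \<in> Z2vec m" "phi g = T" using insert by auto
        have tB: "t \<in> B" using sub by auto
        have GZ: "G t \<in> Z2vec m" using G[OF tB] by blast
        have "phi (z2_mult g (G t)) = insert t T"
        proof -
          have "(L (z2_mult g (G t)) j \<noteq> PI) = (j \<in> insert t T)" if "j \<in> B" for j
          proof -
            have j1: "j \<in> {1..n}" using that by (simp add: B_def)
            have eq: "L (z2_mult g (G t)) j = snd (pmul (L g j) (L (G t) j))"
              using hmul[OF g(1) GZ j1] .
            show ?thesis
            proof (cases "j = t")
              case True
              have "L g j = PI" using g(2) insert(2) True that by (auto simp: phi_def)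
              then show ?thesis using eq True Gj[OF tB] pmul_nz by auto
            next
              case False
              have "L (G t) j = PI" using Gi[OF tB that False] .
              then show ?thesis using eq False g(2) that by (auto simp: phi_def pmul_PI_r)
            qed
          qed
          then show ?thesis using sub by (auto simp: phi_def)
        qed
        then show "\<exists>g\<in>Z2vec m. phi g = insert t T" using mulZ[OF g(1) GZ] by blast
      qed
    qed
    have "Pow B \<subseteq> phi ` Z2vec m"
      using surj finB by (auto intro: finite_subset)
    then have "card (Pow B) \<le> card (phi ` Z2vec m)"
      by (intro card_mono) (auto simp: fin_Z2)
    also have "\<dots> \<le> card (Z2vec m)" by (rule card_image_le[OF fin_Z2])
    finally have "(2::nat) ^ card B \<le> 2 ^ m" by (simp add: card_Pow finB card_Z2)
    then have "card B \<le> m" by simp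
    then show False using cB A(3) assms(1) by (simp add: m_def)
  qed
  have grow: "r \<le> k \<Longrightarrow> \<exists>A \<subseteq> {1..n}. card A = r \<and> Triv A" for r
  proof (induction r)
    case 0
    have "Triv {}" using assms(7) unfolding Triv_def
    proof (intro ballI impI)
      fix g assume g: "g \<in> Z2vec m" and all: "\<forall>i\<in>{1..n}-{}. L g i = PI"
      have lg: "length (snd (U g)) = n" using len[OF g] .
      have w: "snd (U g) = replicate n PI"
      proof (rule nth_equalityI)
        show "length (snd (U g)) = length (replicate n PI)" using lg by simp
        fix b assume "b < length (snd (U g))"
        then have "Suc b \<in> {1..n}" "b < n" using lg by auto
        then show "snd (U g) ! b = replicate n PI ! b" using all[rule_format, of "Suc b"] by (simp add: L_def)
      qed
      obtain l where l: "U g = (l, replicate n PI)" using w by (metis prod.collapse)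
      have l4: "l < 4" using assms(4) g l by (auto simp: m_def pauli_group_def)
      have gg: "z2_mult g g = e" using g by (simp add: z2_mult_def e_def z2_unit_def Z2vec_def zip_same_conv_map o_def map_replicate_const)
      have "pop_mult (U g) (U g) = U e" using assms(6) g gg by (simp add: m_def)
      then have "(l + l) mod 4 = 0" using l assms(2) by (simp add: pop_mult_def Let_def e_def m_def pop_id_def zip_same_conv_map o_def sum_list_replicate)
      then have "l = 0 \<or> l = 2" using l4 by presburger
      moreover have "l \<noteq> 2" using assms(3) g l by (force simp: m_def pop_minus_id_def)
      ultimately have "U g = U e" using l assms(2) by (simp add: pop_id_def e_def m_def)
      then show "g = e" using assms(7) g eZ by (simp add: m_def)
    qed
    then show ?case by (intro exI[of _ "{}"]) auto
  next
    case (Suc r)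
    then obtain A where A: "A \<subseteq> {1..n}" "card A = r" "Triv A" by auto
    then obtain j where j: "j \<in> {1..n}-A" "Triv (insert j A)" using step[OF A(1) A(3)] Suc by auto
    have "finite A" using A(1) finite_subset by blast
    then show ?case using A j by (intro exI[of _ "insert j A"]) auto
  qed
  obtain A where A: "A \<subseteq> {1..n}" "card A = k" "Triv A" using grow by blast
  have finA: "finite A" using A(1) finite_subset by blast
  have A0: "0 \<notin> A" using A(1) by auto
  show ?thesis
  proof (intro exI[of _ A] conjI A ballI)
    fix g assume g: "g \<in> Z2vec (n - k)"
    then have gm: "g \<in> Z2vec m" by (simp add: m_def)
    note pc = pi_set_char[OF finA A0, of "U g"]
    show "pi_set A (U g) = pop_id n \<longleftrightarrow> g = z2_unit (n - k)"
    proof (cases "A = {}")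
      case True
      then show ?thesis using assms(7) g eZ assms(2) by (auto simp: pi_set_empty m_def e_def) (metis)
    next
      case False
      have "pi_set A (U g) = pop_id n \<longleftrightarrow> (\<forall>i\<in>{1..n}-A. L g i = PI)"
      proof
        assume h: "pi_set A (U g) = pop_id n"
        show "\<forall>i\<in>{1..n}-A. L g i = PI"
        proof
          fix i assume i: "i \<in> {1..n}-A"
          then obtain b where b: "i = Suc b" "b < n" by (cases i) auto
          have "snd (pi_set A (U g)) ! b = PI" using h b by (simp add: pop_id_def)
          then show "L g i = PI" using pc len[OF gm] b i by (auto simp: L_def)
        qed
      next
        assume h: "\<forall>i\<in>{1..n}-A. L g i = PI"
        have "snd (pi_set A (U g)) = replicate n PI"
        proof (rule nth_equalityI)
          show "length (snd (pi_set A (U g))) = length (replicate n PI)" using pc len[OF gm] by simp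
          fix b assume "b < length (snd (pi_set A (U g)))"
          then have b: "b < n" using pc len[OF gm] by simp
          have "Suc b \<notin> A \<Longrightarrow> L g (Suc b) = PI" using h b by auto
          then show "snd (pi_set A (U g)) ! b = replicate n PI ! b" using pc len[OF gm] b
            by (auto simp: L_def)
        qed
        then show "pi_set A (U g) = pop_id n" using pc False
          by (simp add: pop_id_def prod_eq_iff)
      qed
      also have "\<dots> \<longleftrightarrow> g = e" using A(3) gm he unfolding Triv_def by auto
      finally show ?thesis by (simp add: e_def m_def)
    qed
  qed
qed

end
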